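(* Let $(X_n)_{n\ge0}$ be simple random walk on a finite rooted tree $T$ with a self-loop at the root, started at $v_0$, with stationary distribution $\pi$, and let $\eta$ be an optimal strong stationary time for it. Let $\tau$ be a random time independent of $(X,\eta)$ with $0<\tau<\infty$ almost surely, and assume $P_{v_0}(\eta<\tau)>0$. Then for every vertex $v$, \[ P_{v_0}\big(X_{\tau-1}=v\,\big|\,\eta<\tau\big)=\pi(v). \]
   Context: Degrees count the self-loop twice; simple random walk moves from $v$ along a uniformly chosen edge-end at $v$, so $\pi(v)=\deg(v)/\sum_z\deg(z)$. A strong stationary time for the walk started at $v_0$ is a stopping time $\eta$ (possibly with respect to a filtration enlarged by independent extra randomness) with $P_{v_0}(X_\eta=y,\eta=k)=\pi(y)P_{v_0}(\eta=k)$ for all $y,k$; it is optimal if $P_{v_0}(\eta>t)=\max_y[1-P^t(v_0,y)/\pi(y)]$ for all $t$. *)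

theory Defs
  imports "HOL-Probability.Probability"
begin

definition is_tree :: "'v set \<Rightarrow> ('v \<Rightarrow> 'v \<Rightarrow> bool) \<Rightarrow> bool" where
  "is_tree V E \<longleftrightarrow> finite V \<and> V \<noteq> {}
     \<and> (\<forall>u w. E u w \<longrightarrow> u \<in> V \<and> w \<in> V)
     \<and> (\<forall>u w. E u w \<longrightarrow> E w u)
     \<and> (\<forall>u. \<not> E u u)
     \<and> (\<forall>u\<in>V. \<forall>w\<in>V. E\<^sup>*\<^sup>* u w)
     \<and> card {{u, w} | u w. E u w} = card V - 1"

definition nbrs :: "'v set \<Rightarrow> ('v \<Rightarrow> 'v \<Rightarrow> bool) \<Rightarrow> 'v \<Rightarrow> 'v set" where
  "nbrs V E v = {w \<in> V. E v w}"

text \<open>Degree in the tree with an added self-loop at the root r (the loop counts twice).\<close>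
definition deg :: "'v set \<Rightarrow> ('v \<Rightarrow> 'v \<Rightarrow> bool) \<Rightarrow> 'v \<Rightarrow> 'v \<Rightarrow> nat" where
  "deg V E r v = (if v \<in> V then card (nbrs V E v) + (if v = r then 2 else 0) else 0)"

definition srw :: "'v set \<Rightarrow> ('v \<Rightarrow> 'v \<Rightarrow> bool) \<Rightarrow> 'v \<Rightarrow> 'v \<Rightarrow> 'v \<Rightarrow> real" where
  "srw V E r v w = (if v \<in> V \<and> w \<in> V then
      ((if E v w then 1 else 0) + (if v = r \<and> w = r then 2 else 0)) / real (deg V E r v)
    else 0)"

fun srw_pow :: "'v set \<Rightarrow> ('v \<Rightarrow> 'v \<Rightarrow> bool) \<Rightarrow> 'v \<Rightarrow> nat \<Rightarrow> 'v \<Rightarrow> 'v \<Rightarrow> real" where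
  "srw_pow V E r 0 x y = (if x = y then 1 else 0)"
| "srw_pow V E r (Suc t) x y = (\<Sum>z\<in>V. srw_pow V E r t x z * srw V E r z y)"

definition stat_pi :: "'v set \<Rightarrow> ('v \<Rightarrow> 'v \<Rightarrow> bool) \<Rightarrow> 'v \<Rightarrow> 'v \<Rightarrow> real" where
  "stat_pi V E r v = real (deg V E r v) / real (\<Sum>z\<in>V. deg V E r z)"

end

theory Submission
  imports Defs
begin


lemma deg_pos:
  assumes tree: "is_tree V E" and r: "r \<in> V" and y: "y \<in> V"
  shows "deg V E r y > 0"
proof (cases "y = r")
  case True thus ?thesis using y by (simp add: deg_def)
next
  case False
  have "E\<^sup>*\<^sup>* y r" using tree r y by (simp add: is_tree_def)
  then obtain w where "E y w" using False by (metis converse_rtranclpE)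
  hence w: "w \<in> nbrs V E y" using tree by (simp add: is_tree_def nbrs_def)
  have "finite (nbrs V E y)" using tree by (simp add: is_tree_def nbrs_def)
  hence "card (nbrs V E y) > 0" using w card_gt_0_iff by blast
  thus ?thesis using y by (simp add: deg_def)
qed

lemma card_nbrs_sum: "finite V \<Longrightarrow> (\<Sum>z\<in>V. (if E v z then 1 else 0::real)) = real (card (nbrs V E v))"
  by (simp add: nbrs_def sum.If_cases Int_def)

lemma srw_sum1:
  assumes tree: "is_tree V E" and r: "r \<in> V" and y: "y \<in> V"
  shows "(\<Sum>z\<in>V. srw V E r y z) = 1"
proof -
  have fin: "finite V" using tree by (simp add: is_tree_def)
  have d: "real (deg V E r y) > 0" using deg_pos[OF assms] by simp
  have "(\<Sum>z\<in>V. srw V E r y z) = (\<Sum>z\<in>V. ((if E y z then 1 else 0) + (if y = r \<and> z = r then 2 else 0))) / real (deg V E r y)"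
    using y by (simp add: srw_def sum_divide_distrib)
  also have "(\<Sum>z\<in>V. ((if E y z then 1 else 0) + (if y = r \<and> z = r then 2 else 0::real))) = real (card (nbrs V E y)) + (if y = r then 2 else 0)"
    using fin r by (simp add: sum.distrib card_nbrs_sum sum.delta')
  also have "\<dots> = real (deg V E r y)" using y by (simp add: deg_def)
  finally show ?thesis using d by simp
qed

lemma stat_step:
  assumes tree: "is_tree V E" and r: "r \<in> V" and v: "v \<in> V"
  shows "(\<Sum>y\<in>V. stat_pi V E r y * srw V E r y v) = stat_pi V E r v"
proof -
  have fin: "finite V" using tree by (simp add: is_tree_def)
  have sym: "\<And>a b. E a b = E b a" using tree unfolding is_tree_def by blast
  define D where "D = real (\<Sum>z\<in>V. deg V E r z)"
  have "(\<Sum>y\<in>V. stat_pi V E r y * srw V E r y v) = (\<Sum>y\<in>V. ((if E y v then 1 else 0) + (if y = r \<and> v = r then 2 else 0)) / D)"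
  proof (rule sum.cong[OF refl])
    fix y assume y: "y \<in> V"
    have d: "real (deg V E r y) > 0" using deg_pos[OF tree r y] by simp
    show "stat_pi V E r y * srw V E r y v = ((if E y v then 1 else 0) + (if y = r \<and> v = r then 2 else 0)) / D"
      using y v d by (simp add: stat_pi_def srw_def D_def)
  qed
  also have "\<dots> = (\<Sum>y\<in>V. ((if E v y then 1 else 0) + (if y = r \<and> v = r then 2 else 0))) / D"
    by (simp add: sum_divide_distrib sym)
  also have "(\<Sum>y\<in>V. ((if E v y then 1 else 0) + (if y = r \<and> v = r then 2 else 0::real))) = real (card (nbrs V E v)) + (if v = r then 2 else 0)"
    using fin r by (simp add: sum.distrib card_nbrs_sum sum.delta')
  also have "\<dots> = real (deg V E r v)" using v by (simp add: deg_def)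
  finally show ?thesis by (simp add: stat_pi_def D_def)
qed

lemma srw_pow_left:
  assumes fin: "finite V"
  shows "srw_pow V E r (Suc m) x y = (\<Sum>z\<in>V. srw V E r x z * srw_pow V E r m z y)"
proof (induction m arbitrary: y)
  case 0
  have a: "srw_pow V E r (Suc 0) x y = (\<Sum>z\<in>V. (if x = z then srw V E r x y else 0))"
    by (simp only: srw_pow.simps) (rule sum.cong, simp, simp)
  have b: "(\<Sum>z\<in>V. srw V E r x z * srw_pow V E r 0 z y) = (\<Sum>z\<in>V. (if y = z then srw V E r x y else 0))"
    by (rule sum.cong, simp, simp)
  show ?case unfolding a b using fin by (simp add: srw_def)
next
  case (Suc m)
  have "srw_pow V E r (Suc (Suc m)) x y = (\<Sum>w\<in>V. srw_pow V E r (Suc m) x w * srw V E r w y)"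
    by (rule srw_pow.simps(2))
  also have "\<dots> = (\<Sum>w\<in>V. (\<Sum>z\<in>V. srw V E r x z * srw_pow V E r m z w) * srw V E r w y)"
    by (simp only: Suc.IH)
  also have "\<dots> = (\<Sum>w\<in>V. \<Sum>z\<in>V. srw V E r x z * (srw_pow V E r m z w * srw V E r w y))"
    by (simp add: sum_distrib_right mult.assoc)
  also have "\<dots> = (\<Sum>z\<in>V. \<Sum>w\<in>V. srw V E r x z * (srw_pow V E r m z w * srw V E r w y))"
    by (rule sum.swap)
  also have "\<dots> = (\<Sum>z\<in>V. srw V E r x z * (\<Sum>w\<in>V. srw_pow V E r m z w * srw V E r w y))"
    by (simp add: sum_distrib_left)
  also have "\<dots> = (\<Sum>z\<in>V. srw V E r x z * srw_pow V E r (Suc m) z y)"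
    by (simp only: srw_pow.simps(2))
  finally show ?case .
qed

lemma stat_pow:
  assumes tree: "is_tree V E" and r: "r \<in> V" and v: "v \<in> V"
  shows "(\<Sum>y\<in>V. stat_pi V E r y * srw_pow V E r m y v) = stat_pi V E r v"
  using v
proof (induction m arbitrary: v)
  case 0
  have fin: "finite V" using tree by (simp add: is_tree_def)
  show ?case using 0 fin by (simp add: if_distrib sum.If_cases)
next
  case (Suc m)
  have "(\<Sum>y\<in>V. stat_pi V E r y * srw_pow V E r (Suc m) y v) = (\<Sum>y\<in>V. \<Sum>z\<in>V. stat_pi V E r y * srw_pow V E r m y z * srw V E r z v)"
    by (simp add: sum_distrib_left mult.assoc)
  also have "\<dots> = (\<Sum>z\<in>V. \<Sum>y\<in>V. stat_pi V E r y * srw_pow V E r m y z * srw V E r z v)"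
    by (rule sum.swap)
  also have "\<dots> = (\<Sum>z\<in>V. (\<Sum>y\<in>V. stat_pi V E r y * srw_pow V E r m y z) * srw V E r z v)"
    by (simp add: sum_distrib_right)
  also have "\<dots> = (\<Sum>z\<in>V. stat_pi V E r z * srw V E r z v)"
    using Suc.IH by simp
  also have "\<dots> = stat_pi V E r v" using stat_step[OF tree r Suc.prems] .
  finally show ?case .
qed



locale walk = prob_space M for M :: "'w measure" +
  fixes V :: "'v set" and E r v0 and X :: "nat \<Rightarrow> 'w \<Rightarrow> 'v"
  assumes tree: "is_tree V E" and root: "r \<in> V" and start: "v0 \<in> V"
    and X_meas: "\<And>n. X n \<in> measurable M (count_space UNIV)"
    and X_law: "\<And>n xs. length xs = Suc n \<Longrightarrow>
        measure M {\<omega> \<in> space M. \<forall>i\<le>n. X i \<omega> = xs ! i}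
        = (if xs ! 0 = v0 then (\<Prod>i<n. srw V E r (xs ! i) (xs ! Suc i)) else 0)"
begin

declare X_meas[measurable]

lemma finV: "finite V" using tree by (simp add: is_tree_def)

definition pev :: "'v list \<Rightarrow> 'w set" where
  "pev xs = {\<omega>\<in>space M. \<forall>i<length xs. X i \<omega> = xs ! i}"

definition NV :: "nat \<Rightarrow> 'w set" where
  "NV n = {\<omega>\<in>space M. X n \<omega> \<notin> V}"

lemma pev_sets[measurable]: "pev xs \<in> events"
  unfolding pev_def by measurable

lemma NV_sets[measurable]: "NV n \<in> events"
proof -
  have "NV n = X n -` (-V) \<inter> space M" by (auto simp: NV_def)
  thus ?thesis using measurable_sets[OF X_meas[of n], of "-V"] by simp
qed

lemma Xeq_sets[measurable]: "{\<omega>\<in>space M. X j \<omega> = c} \<in> events"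
  by measurable

lemma null_by_prob: "A \<in> events \<Longrightarrow> prob A = 0 \<Longrightarrow> A \<in> null_sets M"
  by (simp add: null_sets_def emeasure_eq_measure)

lemma pprob: assumes "xs \<noteq> []"
  shows "prob (pev xs) = (if xs ! 0 = v0 then (\<Prod>i<length xs - 1. srw V E r (xs ! i) (xs ! Suc i)) else 0)"
proof -
  have l: "length xs = Suc (length xs - 1)" using assms by simp
  have "pev xs = {\<omega> \<in> space M. \<forall>i\<le>length xs - 1. X i \<omega> = xs ! i}"
    unfolding pev_def using l by (metis (no_types, lifting) less_Suc_eq_le)
  thus ?thesis using X_law[OF l] by simp
qed

lemma pev_snoc: "pev (xs @ [z]) = {\<omega>\<in>pev xs. X (length xs) \<omega> = z}"
  unfolding pev_def by (auto simp: nth_append less_Suc_eq)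

lemma pprob_snoc: assumes "xs \<noteq> []"
  shows "prob (pev (xs @ [z])) = prob (pev xs) * srw V E r (last xs) z"
proof -
  define n where "n = length xs - 1"
  have l: "length xs = Suc n" using assms n_def by simp
  have "(\<Prod>i<length (xs@[z]) - 1. srw V E r ((xs@[z]) ! i) ((xs@[z]) ! Suc i))
      = (\<Prod>i<Suc n. srw V E r ((xs@[z]) ! i) ((xs@[z]) ! Suc i))" using l by simp
  also have "\<dots> = (\<Prod>i<n. srw V E r ((xs@[z]) ! i) ((xs@[z]) ! Suc i)) * srw V E r ((xs@[z]) ! n) ((xs@[z]) ! Suc n)"
    by simp
  also have "(\<Prod>i<n. srw V E r ((xs@[z]) ! i) ((xs@[z]) ! Suc i)) = (\<Prod>i<n. srw V E r (xs ! i) (xs ! Suc i))"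
    by (rule prod.cong) (auto simp: nth_append l)
  also have "srw V E r ((xs@[z]) ! n) ((xs@[z]) ! Suc n) = srw V E r (last xs) z"
    using l assms by (simp add: nth_append last_conv_nth)
  finally have p: "(\<Prod>i<length (xs@[z]) - 1. srw V E r ((xs@[z]) ! i) ((xs@[z]) ! Suc i))
     = (\<Prod>i<length xs - 1. srw V E r (xs ! i) (xs ! Suc i)) * srw V E r (last xs) z"
    using l by simp
  have h: "(xs@[z]) ! 0 = xs ! 0" using assms by (simp add: nth_append)
  show ?thesis using pprob[OF assms] pprob[of "xs@[z]"] p h by simp
qed

lemma split_G0: assumes A: "A \<in> events"
  shows "prob (pev xs \<inter> A) = prob (pev xs \<inter> A \<inter> NV (length xs)) + (\<Sum>z\<in>V. prob (pev (xs@[z]) \<inter> A))"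
proof -
  have eq: "pev xs \<inter> A = (pev xs \<inter> A \<inter> NV (length xs)) \<union> (\<Union>z\<in>V. pev (xs@[z]) \<inter> A)"
    unfolding pev_snoc NV_def using pev_sets[of xs, THEN sets.sets_into_space] by auto
  have d: "disjoint_family_on (\<lambda>z. pev (xs@[z]) \<inter> A) V"
    by (auto simp: disjoint_family_on_def pev_snoc)
  have u: "prob (\<Union>z\<in>V. pev (xs@[z]) \<inter> A) = (\<Sum>z\<in>V. prob (pev (xs@[z]) \<inter> A))"
    using d A by (intro finite_measure_finite_Union) (auto simp: finV)
  have "prob (pev xs \<inter> A) = prob (pev xs \<inter> A \<inter> NV (length xs)) + prob (\<Union>z\<in>V. pev (xs@[z]) \<inter> A)"
  proof (subst eq, rule finite_measure_Union)
    show "pev xs \<inter> A \<inter> NV (length xs) \<in> events" using A by auto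
    show "(\<Union>z\<in>V. pev (xs@[z]) \<inter> A) \<in> events" using A finV by (intro sets.finite_UN) auto
    show "pev xs \<inter> A \<inter> NV (length xs) \<inter> (\<Union>z\<in>V. pev (xs@[z]) \<inter> A) = {}"
      by (auto simp: pev_snoc NV_def)
  qed
  thus ?thesis using u by simp
qed

lemma NV_null: "NV n \<in> null_sets M"
proof -
  have "\<forall>i\<le>n. NV i \<in> null_sets M"
  proof (induction n)
    case 0
    have p1: "prob (pev [v0]) = 1" using pprob[of "[v0]"] by simp
    have "prob (space M - pev [v0]) = 0" using prob_compl[of "pev [v0]"] p1 by simp
    hence "space M - pev [v0] \<in> null_sets M" by (intro null_by_prob) auto
    moreover have "NV 0 \<subseteq> space M - pev [v0]" using start by (auto simp: NV_def pev_def)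
    ultimately show ?case using null_sets_subset[OF _ NV_sets] by auto
  next
    case (Suc n)
    define L where "L = {xs. set xs \<subseteq> V \<and> length xs = Suc n}"
    have finL: "finite L" unfolding L_def using finV by (rule finite_lists_length_eq)
    have each: "pev xs \<inter> NV (Suc n) \<in> null_sets M" if xs: "xs \<in> L" for xs
    proof -
      have ne: "xs \<noteq> []" using xs by (auto simp: L_def)
      have lx: "last xs \<in> V" using xs ne by (auto simp: L_def)
      have "prob (pev xs \<inter> space M) = prob (pev xs \<inter> space M \<inter> NV (length xs)) + (\<Sum>z\<in>V. prob (pev (xs@[z]) \<inter> space M))"
        by (rule split_G0) simp
      also have "(\<Sum>z\<in>V. prob (pev (xs@[z]) \<inter> space M)) = (\<Sum>z\<in>V. prob (pev xs) * srw V E r (last xs) z)"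
        using pprob_snoc[OF ne] by (simp add: Int_absorb2 pev_def)
      also have "\<dots> = prob (pev xs)" using srw_sum1[OF tree root lx] by (simp add: sum_distrib_left[symmetric])
      finally have "prob (pev xs \<inter> NV (Suc n)) = 0" using xs by (simp add: Int_absorb2 pev_def L_def NV_def Int_assoc)
      thus ?thesis by (intro null_by_prob) auto
    qed
    have sub: "NV (Suc n) \<subseteq> (\<Union>i\<in>{..n}. NV i) \<union> (\<Union>xs\<in>L. pev xs \<inter> NV (Suc n))"
    proof
      fix \<omega> assume w: "\<omega> \<in> NV (Suc n)"
      show "\<omega> \<in> (\<Union>i\<in>{..n}. NV i) \<union> (\<Union>xs\<in>L. pev xs \<inter> NV (Suc n))"
      proof (cases "\<exists>i\<le>n. X i \<omega> \<notin> V")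
        case True thus ?thesis using w by (auto simp: NV_def)
      next
        case False
        define xs where "xs = map (\<lambda>i. X i \<omega>) [0..<Suc n]"
        have "xs \<in> L" using False unfolding L_def xs_def by auto
        moreover have "\<omega> \<in> pev xs" using w unfolding pev_def xs_def NV_def
          by (auto simp del: upt_Suc)
        ultimately show ?thesis using w by blast
      qed
    qed
    have n1: "(\<Union>i\<in>{..n}. NV i) \<in> null_sets M" using Suc.IH by (intro null_sets_UN') auto
    have n2: "(\<Union>xs\<in>L. pev xs \<inter> NV (Suc n)) \<in> null_sets M"
      using each finL by (intro null_sets_UN') (auto intro: countable_finite)
    have "NV (Suc n) \<in> null_sets M"
      using null_sets_subset[OF null_sets.Un[OF n1 n2] NV_sets sub] .
    thus ?case using Suc.IH le_Suc_eq by auto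
  qed
  thus ?thesis by simp
qed

lemma split_null: assumes A: "A \<in> events"
  shows "prob (pev xs \<inter> A) = (\<Sum>z\<in>V. prob (pev (xs@[z]) \<inter> A))"
proof -
  have "pev xs \<inter> A \<inter> NV (length xs) \<in> null_sets M"
  proof (rule null_sets_subset[OF NV_null])
    show "pev xs \<inter> A \<inter> NV (length xs) \<in> events" using A pev_sets NV_sets by blast
  qed blast
  hence "prob (pev xs \<inter> A \<inter> NV (length xs)) = 0" by (rule measure_eq_0_null_sets)
  thus ?thesis using split_G0[OF A, of xs] by simp
qed

lemma markov: assumes "xs \<noteq> []"
  shows "prob (pev xs \<inter> {\<omega>\<in>space M. X (length xs - 1 + m) \<omega> = v}) = prob (pev xs) * srw_pow V E r m (last xs) v"
  using assms
proof (induction m arbitrary: xs)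
  case 0
  have "pev xs \<inter> {\<omega>\<in>space M. X (length xs - 1 + 0) \<omega> = v} = (if last xs = v then pev xs else {})"
    using 0 by (auto simp: pev_def last_conv_nth)
  thus ?case by simp
next
  case (Suc m)
  have "prob (pev xs \<inter> {\<omega>\<in>space M. X (length xs - 1 + Suc m) \<omega> = v})
      = (\<Sum>z\<in>V. prob (pev (xs@[z]) \<inter> {\<omega>\<in>space M. X (length xs - 1 + Suc m) \<omega> = v}))"
    by (rule split_null) simp
  also have "\<dots> = (\<Sum>z\<in>V. prob (pev (xs@[z]) \<inter> {\<omega>\<in>space M. X (length (xs@[z]) - 1 + m) \<omega> = v}))"
  proof -
    have e: "length xs - 1 + Suc m = length xs + m" using Suc.prems by simp
    show ?thesis by (simp only: e length_append_singleton diff_Suc_1)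
  qed
  also have "\<dots> = (\<Sum>z\<in>V. prob (pev xs) * srw V E r (last xs) z * srw_pow V E r m z v)"
    using Suc.IH[of "xs@[_]"] pprob_snoc[OF Suc.prems] by simp
  also have "\<dots> = prob (pev xs) * srw_pow V E r (Suc m) (last xs) v"
    by (simp only: srw_pow_left[OF finV] sum_distrib_left mult.assoc)
  finally show ?case .
qed

end


locale walk_stop = walk M V E r v0 X for M :: "'w measure" and V :: "'v set" and E r v0 and X :: "nat \<Rightarrow> 'w \<Rightarrow> 'v" +
  fixes N :: "'u measure" and U :: "'w \<Rightarrow> 'u" and \<eta> :: "'w \<Rightarrow> enat"
  assumes U_meas: "U \<in> measurable M N"
    and U_indep: "indep_set
        {U -` A \<inter> space M | A. A \<in> sets N}
        {(\<lambda>\<omega> n. X n \<omega>) -` B \<inter> space M | B. B \<in> sets (PiM UNIV (\<lambda>_. count_space UNIV))}"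
    and stopping: "\<And>n::nat. \<exists>S \<in> sets (PiM {..n} (\<lambda>_. count_space UNIV) \<Otimes>\<^sub>M N).
        {\<omega> \<in> space M. \<eta> \<omega> = enat n}
        = {\<omega> \<in> space M. (restrict (\<lambda>i. X i \<omega>) {..n}, U \<omega>) \<in> S}"
    and strong_stationary: "\<And>y k. y \<in> V \<Longrightarrow>
        measure M {\<omega> \<in> space M. X k \<omega> = y \<and> \<eta> \<omega> = enat k}
        = stat_pi V E r y * measure M {\<omega> \<in> space M. \<eta> \<omega> = enat k}"
begin

declare U_meas[measurable]

definition Sk :: "nat \<Rightarrow> ((nat \<Rightarrow> 'v) \<times> 'u) set" where
  "Sk n = (SOME S. S \<in> sets (PiM {..n} (\<lambda>_. count_space UNIV) \<Otimes>\<^sub>M N) \<and>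
        {\<omega> \<in> space M. \<eta> \<omega> = enat n}
        = {\<omega> \<in> space M. (restrict (\<lambda>i. X i \<omega>) {..n}, U \<omega>) \<in> S})"

lemma Sk: "Sk n \<in> sets (PiM {..n} (\<lambda>_. count_space UNIV) \<Otimes>\<^sub>M N)"
  "{\<omega> \<in> space M. \<eta> \<omega> = enat n} = {\<omega> \<in> space M. (restrict (\<lambda>i. X i \<omega>) {..n}, U \<omega>) \<in> Sk n}"
  using someI_ex[OF stopping[of n, unfolded Bex_def]] unfolding Sk_def by blast+

definition sec :: "nat \<Rightarrow> 'v list \<Rightarrow> 'u set" where
  "sec n xs = Pair (restrict (\<lambda>i. xs ! i) {..n}) -` Sk n"

definition q :: "nat \<Rightarrow> 'v list \<Rightarrow> real" where
  "q n xs = prob (U -` sec n xs \<inter> space M)"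

definition Lk :: "nat \<Rightarrow> 'v list set" where
  "Lk n = {xs. set xs \<subseteq> V \<and> length xs = Suc n}"

lemma finLk: "finite (Lk n)" unfolding Lk_def using finV by (rule finite_lists_length_eq)

lemma sec_sets: "sec n xs \<in> sets N"
  unfolding sec_def by (rule sets_Pair1[OF Sk(1)])

lemma Usec_sets: "U -` sec n xs \<inter> space M \<in> events"
  using measurable_sets[OF U_meas sec_sets] .

lemma eta_sets: "{\<omega> \<in> space M. \<eta> \<omega> = enat n} \<in> events"
proof -
  have m: "(\<lambda>\<omega>. (restrict (\<lambda>i. X i \<omega>) {..n}, U \<omega>)) \<in> measurable M (PiM {..n} (\<lambda>_. count_space UNIV) \<Otimes>\<^sub>M N)"
    by measurable
  have "{\<omega> \<in> space M. \<eta> \<omega> = enat n} = (\<lambda>\<omega>. (restrict (\<lambda>i. X i \<omega>) {..n}, U \<omega>)) -` Sk n \<inter> space M"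
    using Sk(2) by auto
  thus ?thesis using measurable_sets[OF m Sk(1)] by simp
qed

lemma pevF_in: "pev xs \<inter> {\<omega>\<in>space M. X j \<omega> = c} \<in>
   {(\<lambda>\<omega> n. X n \<omega>) -` B \<inter> space M | B. B \<in> sets (PiM UNIV (\<lambda>_. count_space UNIV))}"
proof -
  define B where "B = {f \<in> space (PiM UNIV (\<lambda>_::nat. count_space (UNIV::'v set))). (\<forall>i<length xs. f i = xs ! i) \<and> f j = c}"
  have "B \<in> sets (PiM UNIV (\<lambda>_. count_space UNIV))" unfolding B_def by measurable
  moreover have "pev xs \<inter> {\<omega>\<in>space M. X j \<omega> = c} = (\<lambda>\<omega> n. X n \<omega>) -` B \<inter> space M"
    unfolding B_def pev_def by (auto simp: space_PiM)
  ultimately show ?thesis by blast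
qed

lemma decomp:
  "prob {\<omega>\<in>space M. X j \<omega> = c \<and> \<eta> \<omega> = enat k}
   = (\<Sum>xs\<in>Lk k. q k xs * prob (pev xs \<inter> {\<omega>\<in>space M. X j \<omega> = c}))"
proof -
  define D where "D = {\<omega>\<in>space M. X j \<omega> = c \<and> \<eta> \<omega> = enat k}"
  define NZ where "NZ = (\<Union>i\<in>{..k}. NV i)"
  have NZ: "NZ \<in> null_sets M" unfolding NZ_def using NV_null by (intro null_sets_UN') auto
  have Dsets: "D \<in> events"
  proof -
    have "D = {\<omega>\<in>space M. X j \<omega> = c} \<inter> {\<omega> \<in> space M. \<eta> \<omega> = enat k}" unfolding D_def by auto
    thus ?thesis using eta_sets by auto
  qed
  have eq: "D - NZ = (\<Union>xs\<in>Lk k. (U -` sec k xs \<inter> space M) \<inter> (pev xs \<inter> {\<omega>\<in>space M. X j \<omega> = c}))"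
  proof (intro equalityI subsetI)
    fix \<omega> assume w: "\<omega> \<in> D - NZ"
    define xs where "xs = map (\<lambda>i. X i \<omega>) [0..<Suc k]"
    have sp: "\<omega> \<in> space M" using w D_def by auto
    have inV: "\<forall>i\<le>k. X i \<omega> \<in> V" using w sp unfolding NZ_def NV_def by auto
    have xL: "xs \<in> Lk k" using inV unfolding Lk_def xs_def by auto
    have xn: "\<And>i. i \<le> k \<Longrightarrow> xs ! i = X i \<omega>" unfolding xs_def
      by (metis (no_types, lifting) add_0 diff_zero le_imp_less_Suc nth_map_upt)
    have pe: "\<omega> \<in> pev xs" using sp xn unfolding pev_def xs_def by auto
    have r: "restrict (\<lambda>i. xs ! i) {..k} = restrict (\<lambda>i. X i \<omega>) {..k}"
      using xn by (intro restrict_ext) auto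
    have "(restrict (\<lambda>i. X i \<omega>) {..k}, U \<omega>) \<in> Sk k" using w Sk(2)[of k] unfolding D_def by blast
    hence "U \<omega> \<in> sec k xs" unfolding sec_def r by simp
    thus "\<omega> \<in> (\<Union>xs\<in>Lk k. (U -` sec k xs \<inter> space M) \<inter> (pev xs \<inter> {\<omega>\<in>space M. X j \<omega> = c}))"
      using xL pe sp w unfolding D_def by blast
  next
    fix \<omega> assume "\<omega> \<in> (\<Union>xs\<in>Lk k. (U -` sec k xs \<inter> space M) \<inter> (pev xs \<inter> {\<omega>\<in>space M. X j \<omega> = c}))"
    then obtain xs where xL: "xs \<in> Lk k" and u: "U \<omega> \<in> sec k xs" and sp: "\<omega> \<in> space M"
      and pe: "\<omega> \<in> pev xs" and xj: "X j \<omega> = c" by blast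
    have xn: "\<And>i. i \<le> k \<Longrightarrow> X i \<omega> = xs ! i" using pe xL unfolding pev_def Lk_def by auto
    have r: "restrict (\<lambda>i. xs ! i) {..k} = restrict (\<lambda>i. X i \<omega>) {..k}"
      using xn by (intro restrict_ext) auto
    have "(restrict (\<lambda>i. X i \<omega>) {..k}, U \<omega>) \<in> Sk k" using u unfolding sec_def r by simp
    hence "\<eta> \<omega> = enat k" using Sk(2)[of k] sp by blast
    moreover have "\<omega> \<notin> NZ"
    proof
      assume "\<omega> \<in> NZ"
      then obtain i where "i \<le> k" "X i \<omega> \<notin> V" unfolding NZ_def NV_def by auto
      moreover have "xs ! i \<in> V" using xL \<open>i \<le> k\<close> unfolding Lk_def by auto
      ultimately show False using xn by auto
    qed
    ultimately show "\<omega> \<in> D - NZ" using sp xj unfolding D_def by auto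
  qed
  have "prob D = prob (D - NZ)" using measure_Diff_null_set[OF Dsets NZ] by simp
  also have "\<dots> = (\<Sum>xs\<in>Lk k. prob ((U -` sec k xs \<inter> space M) \<inter> (pev xs \<inter> {\<omega>\<in>space M. X j \<omega> = c})))"
    unfolding eq
  proof (rule finite_measure_finite_Union)
    show "finite (Lk k)" by (rule finLk)
    show "(\<lambda>xs. (U -` sec k xs \<inter> space M) \<inter> (pev xs \<inter> {\<omega>\<in>space M. X j \<omega> = c})) ` Lk k \<subseteq> events"
      using Usec_sets by auto
    show "disjoint_family_on (\<lambda>xs. (U -` sec k xs \<inter> space M) \<inter> (pev xs \<inter> {\<omega>\<in>space M. X j \<omega> = c})) (Lk k)"
      unfolding disjoint_family_on_def
    proof (intro ballI impI)
      fix xs ys assume "xs \<in> Lk k" "ys \<in> Lk k" "xs \<noteq> ys"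
      then obtain i where "i < Suc k" "xs ! i \<noteq> ys ! i" unfolding Lk_def
        by (metis (mono_tags, lifting) mem_Collect_eq nth_equalityI)
      thus "(U -` sec k xs \<inter> space M) \<inter> (pev xs \<inter> {\<omega>\<in>space M. X j \<omega> = c}) \<inter>
            ((U -` sec k ys \<inter> space M) \<inter> (pev ys \<inter> {\<omega>\<in>space M. X j \<omega> = c})) = {}"
        using \<open>xs \<in> Lk k\<close> \<open>ys \<in> Lk k\<close> unfolding pev_def Lk_def by auto
    qed
  qed
  also have "\<dots> = (\<Sum>xs\<in>Lk k. q k xs * prob (pev xs \<inter> {\<omega>\<in>space M. X j \<omega> = c}))"
  proof (rule sum.cong[OF refl])
    fix xs
    have "U -` sec k xs \<inter> space M \<in> {U -` A \<inter> space M | A. A \<in> sets N}" using sec_sets by blast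
    from indep_setD[OF U_indep this pevF_in]
    show "prob ((U -` sec k xs \<inter> space M) \<inter> (pev xs \<inter> {\<omega>\<in>space M. X j \<omega> = c})) = q k xs * prob (pev xs \<inter> {\<omega>\<in>space M. X j \<omega> = c})"
      unfolding q_def .
  qed
  finally show ?thesis unfolding D_def .
qed

lemma pev_last: assumes "xs \<in> Lk k"
  shows "pev xs \<inter> {\<omega>\<in>space M. X k \<omega> = y} = (if last xs = y then pev xs else {})"
proof -
  have l: "length xs = Suc k" using assms by (simp add: Lk_def)
  hence "last xs = xs ! k" by (metis diff_Suc_1 last_conv_nth list.size(3) nat.distinct(1))
  thus ?thesis using l by (auto simp: pev_def)
qed

lemma ss_sum: assumes y: "y \<in> V"
  shows "(\<Sum>xs\<in>{xs\<in>Lk k. last xs = y}. q k xs * prob (pev xs)) = stat_pi V E r y * prob {\<omega> \<in> space M. \<eta> \<omega> = enat k}"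
proof -
  have "(\<Sum>xs\<in>{xs\<in>Lk k. last xs = y}. q k xs * prob (pev xs)) = (\<Sum>xs\<in>Lk k. if last xs = y then q k xs * prob (pev xs) else 0)"
    by (rule sum.inter_filter[OF finLk])
  also have "\<dots> = (\<Sum>xs\<in>Lk k. q k xs * prob (pev xs \<inter> {\<omega>\<in>space M. X k \<omega> = y}))"
    by (rule sum.cong[OF refl]) (simp add: pev_last)
  also have "\<dots> = prob {\<omega>\<in>space M. X k \<omega> = y \<and> \<eta> \<omega> = enat k}" by (rule decomp[symmetric])
  also have "\<dots> = stat_pi V E r y * prob {\<omega> \<in> space M. \<eta> \<omega> = enat k}" by (rule strong_stationary[OF y])
  finally show ?thesis .
qed

lemma core: assumes ks: "k \<le> s" and v: "v \<in> V"
  shows "prob {\<omega>\<in>space M. X s \<omega> = v \<and> \<eta> \<omega> = enat k} = stat_pi V E r v * prob {\<omega> \<in> space M. \<eta> \<omega> = enat k}"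
proof -
  define h where "h xs = q k xs * prob (pev xs) * srw_pow V E r (s - k) (last xs) v" for xs
  have "prob {\<omega>\<in>space M. X s \<omega> = v \<and> \<eta> \<omega> = enat k} = (\<Sum>xs\<in>Lk k. q k xs * prob (pev xs \<inter> {\<omega>\<in>space M. X s \<omega> = v}))"
    by (rule decomp)
  also have "\<dots> = (\<Sum>xs\<in>Lk k. h xs)"
  proof (rule sum.cong[OF refl])
    fix xs assume xL: "xs \<in> Lk k"
    have l: "length xs = Suc k" using xL by (simp add: Lk_def)
    have "prob (pev xs \<inter> {\<omega>\<in>space M. X (length xs - 1 + (s - k)) \<omega> = v}) = prob (pev xs) * srw_pow V E r (s - k) (last xs) v"
      by (rule markov) (use l in auto)
    moreover have "length xs - 1 + (s - k) = s" using l ks by simp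
    ultimately show "q k xs * prob (pev xs \<inter> {\<omega>\<in>space M. X s \<omega> = v}) = h xs"
      unfolding h_def by simp
  qed
  also have "\<dots> = (\<Sum>y\<in>V. \<Sum>xs\<in>{xs\<in>Lk k. last xs = y}. h xs)"
  proof (rule sum.group[symmetric, OF finLk finV])
    show "last ` Lk k \<subseteq> V"
    proof
      fix y assume "y \<in> last ` Lk k"
      then obtain xs where "xs \<in> Lk k" "y = last xs" by auto
      thus "y \<in> V" unfolding Lk_def by (metis (mono_tags, lifting) last_in_set length_0_conv mem_Collect_eq nat.distinct(1) subsetD)
    qed
  qed
  also have "\<dots> = (\<Sum>y\<in>V. (\<Sum>xs\<in>{xs\<in>Lk k. last xs = y}. q k xs * prob (pev xs)) * srw_pow V E r (s - k) y v)"
    unfolding h_def by (rule sum.cong[OF refl]) (simp add: sum_distrib_right)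
  also have "\<dots> = (\<Sum>y\<in>V. stat_pi V E r y * srw_pow V E r (s - k) y v) * prob {\<omega> \<in> space M. \<eta> \<omega> = enat k}"
  proof -
    have "(\<Sum>y\<in>V. (\<Sum>xs\<in>{xs\<in>Lk k. last xs = y}. q k xs * prob (pev xs)) * srw_pow V E r (s - k) y v)
       = (\<Sum>y\<in>V. stat_pi V E r y * srw_pow V E r (s - k) y v * prob {\<omega> \<in> space M. \<eta> \<omega> = enat k})"
      by (rule sum.cong[OF refl], subst ss_sum, assumption, simp only: mult_ac)
    thus ?thesis by (simp only: sum_distrib_right)
  qed
  also have "\<dots> = stat_pi V E r v * prob {\<omega> \<in> space M. \<eta> \<omega> = enat k}"
    by (simp add: stat_pow[OF tree root v])
  finally show ?thesis .
qed

end


theorem lemma2p10: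
  fixes M :: "'w measure"
    and V :: "'v set" and E :: "'v \<Rightarrow> 'v \<Rightarrow> bool" and r v0 :: 'v
    and X :: "nat \<Rightarrow> 'w \<Rightarrow> 'v"
    and N :: "'u measure" and U :: "'w \<Rightarrow> 'u"
    and \<eta> :: "'w \<Rightarrow> enat" and \<tau> :: "'w \<Rightarrow> enat"
  assumes "prob_space M"
    and tree: "is_tree V E" and root: "r \<in> V" and start: "v0 \<in> V"
    and X_meas: "\<And>n. X n \<in> measurable M (count_space UNIV)"
    and X_law: "\<And>n xs. length xs = Suc n \<Longrightarrow>
        measure M {\<omega> \<in> space M. \<forall>i\<le>n. X i \<omega> = xs ! i}
        = (if xs ! 0 = v0 then (\<Prod>i<n. srw V E r (xs ! i) (xs ! Suc i)) else 0)"
    and U_meas: "U \<in> measurable M N"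
    and U_indep: "prob_space.indep_set M
        {U -` A \<inter> space M | A. A \<in> sets N}
        {(\<lambda>\<omega> n. X n \<omega>) -` B \<inter> space M | B. B \<in> sets (PiM UNIV (\<lambda>_. count_space UNIV))}"
    and stopping: "\<And>n::nat. \<exists>S \<in> sets (PiM {..n} (\<lambda>_. count_space UNIV) \<Otimes>\<^sub>M N).
        {\<omega> \<in> space M. \<eta> \<omega> = enat n}
        = {\<omega> \<in> space M. (restrict (\<lambda>i. X i \<omega>) {..n}, U \<omega>) \<in> S}"
    and strong_stationary: "\<And>y k. y \<in> V \<Longrightarrow>
        measure M {\<omega> \<in> space M. X k \<omega> = y \<and> \<eta> \<omega> = enat k}
        = stat_pi V E r y * measure M {\<omega> \<in> space M. \<eta> \<omega> = enat k}"
    and optimal: "\<And>t::nat. measure M {\<omega> \<in> space M. \<eta> \<omega> > enat t}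
        = Max ((\<lambda>y. 1 - srw_pow V E r t v0 y / stat_pi V E r y) ` V)"
    and tau_meas: "\<tau> \<in> measurable M (count_space UNIV)"
    and tau_indep: "prob_space.indep_set M
        {\<tau> -` A \<inter> space M | A. A \<in> sets (count_space UNIV)}
        {(\<lambda>\<omega>. ((\<lambda>n. X n \<omega>), \<eta> \<omega>)) -` B \<inter> space M | B.
           B \<in> sets (PiM UNIV (\<lambda>_. count_space UNIV) \<Otimes>\<^sub>M count_space UNIV)}"
    and tau_pos: "AE \<omega> in M. 0 < \<tau> \<omega>"
    and tau_fin: "AE \<omega> in M. \<tau> \<omega> < \<infinity>"
    and pos: "measure M {\<omega> \<in> space M. \<eta> \<omega> < \<tau> \<omega>} > 0"
    and v: "v \<in> V"
  shows "measure M {\<omega> \<in> space M. X (the_enat (\<tau> \<omega>) - 1) \<omega> = v \<and> \<eta> \<omega> < \<tau> \<omega>}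
         / measure M {\<omega> \<in> space M. \<eta> \<omega> < \<tau> \<omega>} = stat_pi V E r v"
proof -
  interpret prob_space M by fact
  interpret walk_stop M V E r v0 X N U \<eta>
    by (intro walk_stop.intro walk.intro walk_axioms.intro walk_stop_axioms.intro)
       (use assms in auto)
  note tau_meas[measurable]
  have eta_lt: "\<And>e t. (e < enat t) = (\<exists>k<t. e = enat k)"
    by (case_tac e) auto
  have etalt_eq: "{\<omega>\<in>space M. \<eta> \<omega> < enat t} = (\<Union>k\<in>{..<t}. {\<omega>\<in>space M. \<eta> \<omega> = enat k})" for t
    using eta_lt by auto
  have etalt_sets: "{\<omega>\<in>space M. \<eta> \<omega> < enat t} \<in> events" for t
    unfolding etalt_eq using eta_sets by auto
  have Xlt_sets: "{\<omega>\<in>space M. X (t - 1) \<omega> = v \<and> \<eta> \<omega> < enat t} \<in> events" for t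
  proof -
    have "{\<omega>\<in>space M. X (t - 1) \<omega> = v \<and> \<eta> \<omega> < enat t} = {\<omega>\<in>space M. X (t - 1) \<omega> = v} \<inter> {\<omega>\<in>space M. \<eta> \<omega> < enat t}"
      by auto
    thus ?thesis using etalt_sets by auto
  qed
  have step1: "prob {\<omega>\<in>space M. X (t - 1) \<omega> = v \<and> \<eta> \<omega> < enat t} = stat_pi V E r v * prob {\<omega>\<in>space M. \<eta> \<omega> < enat t}" for t
  proof -
    have e1: "{\<omega>\<in>space M. X (t - 1) \<omega> = v \<and> \<eta> \<omega> < enat t} = (\<Union>k\<in>{..<t}. {\<omega>\<in>space M. X (t - 1) \<omega> = v \<and> \<eta> \<omega> = enat k})"
      using eta_lt by auto
    have ev: "{\<omega>\<in>space M. X (t - 1) \<omega> = v \<and> \<eta> \<omega> = enat k} \<in> events" for k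
    proof -
      have "{\<omega>\<in>space M. X (t - 1) \<omega> = v \<and> \<eta> \<omega> = enat k} = {\<omega>\<in>space M. X (t - 1) \<omega> = v} \<inter> {\<omega>\<in>space M. \<eta> \<omega> = enat k}"
        by auto
      thus ?thesis using eta_sets by auto
    qed
    have "prob {\<omega>\<in>space M. X (t - 1) \<omega> = v \<and> \<eta> \<omega> < enat t} = (\<Sum>k<t. prob {\<omega>\<in>space M. X (t - 1) \<omega> = v \<and> \<eta> \<omega> = enat k})"
      unfolding e1 by (rule finite_measure_finite_Union) (use ev in \<open>auto simp: disjoint_family_on_def\<close>)
    also have "\<dots> = (\<Sum>k<t. stat_pi V E r v * prob {\<omega>\<in>space M. \<eta> \<omega> = enat k})"
      by (rule sum.cong[OF refl]) (rule core, auto simp: v)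
    also have "\<dots> = stat_pi V E r v * (\<Sum>k<t. prob {\<omega>\<in>space M. \<eta> \<omega> = enat k})"
      by (simp add: sum_distrib_left)
    also have "(\<Sum>k<t. prob {\<omega>\<in>space M. \<eta> \<omega> = enat k}) = prob {\<omega>\<in>space M. \<eta> \<omega> < enat t}"
      unfolding etalt_eq by (rule finite_measure_finite_Union[symmetric]) (use eta_sets in \<open>auto simp: disjoint_family_on_def\<close>)
    finally show ?thesis .
  qed
  define A where "A t = {\<omega>\<in>space M. X (the_enat (\<tau> \<omega>) - 1) \<omega> = v \<and> \<eta> \<omega> < \<tau> \<omega> \<and> \<tau> \<omega> = enat t}" for t
  define B where "B t = {\<omega>\<in>space M. \<eta> \<omega> < \<tau> \<omega> \<and> \<tau> \<omega> = enat t}" for t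
  have tset: "\<tau> -` {enat t} \<inter> space M \<in> {\<tau> -` A \<inter> space M | A. A \<in> sets (count_space UNIV)}" for t
    by (intro CollectI exI[of _ "{enat t}"] conjI) auto
  have spP: "space (PiM UNIV (\<lambda>_::nat. count_space (UNIV::'v set)) \<Otimes>\<^sub>M count_space (UNIV::enat set)) = UNIV"
    by (simp add: space_pair_measure space_PiM)
  have A_eq: "A t = (\<tau> -` {enat t} \<inter> space M) \<inter> {\<omega>\<in>space M. X (t - 1) \<omega> = v \<and> \<eta> \<omega> < enat t}" for t
    unfolding A_def by auto
  have B_eq: "B t = (\<tau> -` {enat t} \<inter> space M) \<inter> {\<omega>\<in>space M. \<eta> \<omega> < enat t}" for t
    unfolding B_def by auto
  have probA: "prob (A t) = prob (\<tau> -` {enat t} \<inter> space M) * prob {\<omega>\<in>space M. X (t - 1) \<omega> = v \<and> \<eta> \<omega> < enat t}" for t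
  proof -
    define C where "C = {p \<in> space (PiM UNIV (\<lambda>_::nat. count_space (UNIV::'v set)) \<Otimes>\<^sub>M count_space (UNIV::enat set)). fst p (t - 1) = v \<and> snd p < enat t}"
    have "C \<in> sets (PiM UNIV (\<lambda>_. count_space UNIV) \<Otimes>\<^sub>M count_space UNIV)" unfolding C_def by measurable
    moreover have "{\<omega>\<in>space M. X (t - 1) \<omega> = v \<and> \<eta> \<omega> < enat t} = (\<lambda>\<omega>. ((\<lambda>n. X n \<omega>), \<eta> \<omega>)) -` C \<inter> space M"
      unfolding C_def spP by auto
    ultimately have "{\<omega>\<in>space M. X (t - 1) \<omega> = v \<and> \<eta> \<omega> < enat t} \<in> {(\<lambda>\<omega>. ((\<lambda>n. X n \<omega>), \<eta> \<omega>)) -` B \<inter> space M | B.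
           B \<in> sets (PiM UNIV (\<lambda>_. count_space UNIV) \<Otimes>\<^sub>M count_space UNIV)}"
      by (intro CollectI exI[of _ C] conjI)
    from indep_setD[OF tau_indep tset this] show ?thesis unfolding A_eq .
  qed
  have probB: "prob (B t) = prob (\<tau> -` {enat t} \<inter> space M) * prob {\<omega>\<in>space M. \<eta> \<omega> < enat t}" for t
  proof -
    define C where "C = {p \<in> space (PiM UNIV (\<lambda>_::nat. count_space (UNIV::'v set)) \<Otimes>\<^sub>M count_space (UNIV::enat set)). snd p < enat t}"
    have "C \<in> sets (PiM UNIV (\<lambda>_. count_space UNIV) \<Otimes>\<^sub>M count_space UNIV)" unfolding C_def by measurable
    moreover have "{\<omega>\<in>space M. \<eta> \<omega> < enat t} = (\<lambda>\<omega>. ((\<lambda>n. X n \<omega>), \<eta> \<omega>)) -` C \<inter> space M"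
      unfolding C_def spP by auto
    ultimately have "{\<omega>\<in>space M. \<eta> \<omega> < enat t} \<in> {(\<lambda>\<omega>. ((\<lambda>n. X n \<omega>), \<eta> \<omega>)) -` B \<inter> space M | B.
           B \<in> sets (PiM UNIV (\<lambda>_. count_space UNIV) \<Otimes>\<^sub>M count_space UNIV)}"
      by (intro CollectI exI[of _ C] conjI)
    from indep_setD[OF tau_indep tset this] show ?thesis unfolding B_eq .
  qed
  have AB: "prob (A t) = stat_pi V E r v * prob (B t)" for t
    using probA probB step1 by simp
  have tsets: "\<tau> -` {enat t} \<inter> space M \<in> events" for t
    using measurable_sets[OF tau_meas, of "{enat t}"] by simp
  have A_sets: "A t \<in> events" for t unfolding A_eq using tsets Xlt_sets by auto
  have B_sets: "B t \<in> events" for t unfolding B_eq using tsets etalt_sets by auto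
  define Ninf where "Ninf = {\<omega>\<in>space M. \<not> \<tau> \<omega> < \<infinity>}"
  have Ninf_sets: "Ninf \<in> events" unfolding Ninf_def by measurable
  have Ninf: "Ninf \<in> null_sets M"
    using AE_iff_null[of M "\<lambda>\<omega>. \<tau> \<omega> < \<infinity>"] Ninf_sets tau_fin unfolding Ninf_def by auto
  have etafin: "{\<omega>\<in>space M. \<eta> \<omega> \<noteq> \<infinity>} \<in> events"
  proof -
    have "{\<omega>\<in>space M. \<eta> \<omega> \<noteq> \<infinity>} = (\<Union>k. {\<omega>\<in>space M. \<eta> \<omega> = enat k})" by auto
    thus ?thesis using eta_sets by auto
  qed
  define AA where "AA = {\<omega> \<in> space M. X (the_enat (\<tau> \<omega>) - 1) \<omega> = v \<and> \<eta> \<omega> < \<tau> \<omega>}"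
  define BB where "BB = {\<omega> \<in> space M. \<eta> \<omega> < \<tau> \<omega>}"
  have AA_eq: "AA = (\<Union>t. A t) \<union> (Ninf \<inter> {\<omega>\<in>space M. \<eta> \<omega> \<noteq> \<infinity>} \<inter> {\<omega>\<in>space M. X (the_enat \<infinity> - 1) \<omega> = v})" (is "_ = ?R")
  proof (rule set_eqI)
    fix x show "x \<in> AA \<longleftrightarrow> x \<in> ?R" by (cases "\<tau> x") (auto simp: AA_def A_def Ninf_def)
  qed
  have BB_eq: "BB = (\<Union>t. B t) \<union> (Ninf \<inter> {\<omega>\<in>space M. \<eta> \<omega> \<noteq> \<infinity>})" (is "_ = ?R")
  proof (rule set_eqI)
    fix x show "x \<in> BB \<longleftrightarrow> x \<in> ?R" by (cases "\<tau> x") (auto simp: BB_def B_def Ninf_def)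
  qed
  have AA_sets: "AA \<in> events" unfolding AA_eq using A_sets Ninf_sets etafin by auto
  have BB_sets: "BB \<in> events" unfolding BB_eq using B_sets Ninf_sets etafin by auto
  have AA_diff: "AA - Ninf = (\<Union>t. A t)" (is "_ = ?R")
  proof (rule set_eqI)
    fix x show "x \<in> AA - Ninf \<longleftrightarrow> x \<in> ?R" by (cases "\<tau> x") (auto simp: AA_def A_def Ninf_def)
  qed
  have BB_diff: "BB - Ninf = (\<Union>t. B t)" (is "_ = ?R")
  proof (rule set_eqI)
    fix x show "x \<in> BB - Ninf \<longleftrightarrow> x \<in> ?R" by (cases "\<tau> x") (auto simp: BB_def B_def Ninf_def)
  qed
  have sA: "(\<lambda>t. prob (A t)) sums prob AA"
  proof -
    have d: "disjoint_family A" unfolding disjoint_family_on_def A_def by auto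
    have "(\<lambda>t. prob (A t)) sums prob (\<Union>t. A t)"
      by (rule finite_measure_UNION) (use A_sets d in auto)
    moreover have "prob (\<Union>t. A t) = prob AA"
      using measure_Diff_null_set[OF AA_sets Ninf] AA_diff by simp
    ultimately show ?thesis by simp
  qed
  have sB: "(\<lambda>t. prob (B t)) sums prob BB"
  proof -
    have d: "disjoint_family B" unfolding disjoint_family_on_def B_def by auto
    have "(\<lambda>t. prob (B t)) sums prob (\<Union>t. B t)"
      by (rule finite_measure_UNION) (use B_sets d in auto)
    moreover have "prob (\<Union>t. B t) = prob BB"
      using measure_Diff_null_set[OF BB_sets Ninf] BB_diff by simp
    ultimately show ?thesis by simp
  qed
  have "(\<lambda>t. prob (A t)) sums (stat_pi V E r v * prob BB)"
    unfolding AB by (rule sums_mult[OF sB])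
  hence "prob AA = stat_pi V E r v * prob BB" using sA sums_unique2 by blast
  moreover have "prob BB > 0" using pos unfolding BB_def .
  ultimately show ?thesis unfolding AA_def BB_def by simp
qed

end
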